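(* For relatively prime integers $r, s$ put $u = r^2 + s^2$, $v = 2r^2 - s^2$ and $A = uv(u^2 - v^2) = -3r^2(r^2+s^2)(r^2-2s^2)(2r^2-s^2)$. Then for all but finitely many pairs $(r,s)$ of relatively prime integers with $r \neq 0$, the eight rational numbers \[ 1,\ -1,\ A,\ -A,\ uv,\ -uv,\ u^2 - v^2,\ -(u^2-v^2) \] represent eight pairwise distinct classes in $\mathbb{Q}^\times/(\mathbb{Q}^\times)^2$.
   Context: $\mathbb{Q}^\times/(\mathbb{Q}^\times)^2$ denotes the group of nonzero rationals modulo nonzero squares; two nonzero rationals represent the same class iff their quotient is a square of a rational. *)

theory Defs
  imports Complex_Main
begin

definition same_sq_class :: "rat \<Rightarrow> rat \<Rightarrow> bool" where
  "same_sq_class a b \<longleftrightarrow> a \<noteq> 0 \<and> b \<noteq> 0 \<and> (\<exists>q::rat. a / b = q ^ 2)"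

definition sq_u :: "int \<Rightarrow> int \<Rightarrow> int" where "sq_u r s = r^2 + s^2"
definition sq_v :: "int \<Rightarrow> int \<Rightarrow> int" where "sq_v r s = 2 * r^2 - s^2"
definition sq_A :: "int \<Rightarrow> int \<Rightarrow> int" where
  "sq_A r s = sq_u r s * sq_v r s * ((sq_u r s)^2 - (sq_v r s)^2)"

definition eight_list :: "int \<Rightarrow> int \<Rightarrow> rat list" where
  "eight_list r s = (let u = sq_u r s; v = sq_v r s; A = sq_A r s in
     map rat_of_int [1, -1, A, -A, u*v, -(u*v), u^2 - v^2, -(u^2 - v^2)])"

definition eight_distinct_classes :: "int \<Rightarrow> int \<Rightarrow> bool" where
  "eight_distinct_classes r s \<longleftrightarrow>
     (\<forall>i<8. eight_list r s ! i \<noteq> 0) \<and>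
     (\<forall>i<8. \<forall>j<8. i \<noteq> j \<longrightarrow> \<not> same_sq_class (eight_list r s ! i) (eight_list r s ! j))"

end

theory Submission
  imports Defs "HOL-Computational_Algebra.Nth_Powers"
begin

lemma coprime_pow_int:
  fixes x y z :: int and k :: nat
  assumes "coprime x y" "x > 0" "y > 0" "x * y = z ^ k"
  shows "\<exists>a. x = a ^ k"
proof -
  have c: "coprime (nat x) (nat y)" using assms by (simp add: coprime_int_iff[symmetric])
  have "int (nat x * nat y) = x * y" using assms by simp
  also have "\<dots> = \<bar>z\<bar> ^ k" using assms
    by (metis abs_of_pos mult_pos_pos power_abs)
  also have "\<dots> = int (nat \<bar>z\<bar> ^ k)" by simp
  finally have "nat x * nat y = nat \<bar>z\<bar> ^ k" by (simp only: of_nat_eq_iff)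
  then have "is_nth_power k (nat x)"
    using is_nth_power_mult_coprime_natD(1)[OF c] assms by auto
  then obtain a where "nat x = a ^ k" by (auto elim: is_nth_powerE)
  then have "x = int a ^ k" using assms by (metis of_nat_power nat_0_le less_imp_le)
  then show ?thesis by blast
qed

lemma rat_sq_int:
  fixes n :: int and q :: rat
  assumes "of_int n = q ^ 2"
  shows "\<exists>k. n = k ^ 2"
proof -
  obtain a b where q: "q = Fract a b" and b: "b > 0" and cp: "coprime a b" by (cases q) auto
  have "q = of_int a / of_int b" using q by (simp add: Fract_of_int_quotient)
  then have "of_int n * (of_int b) ^ 2 = (of_int a :: rat) ^ 2" using assms b
    by (simp add: power_divide)
  then have e: "n * b ^ 2 = a ^ 2" by (metis of_int_eq_iff of_int_mult of_int_power)
  then have "b dvd a ^ 2" by (metis dvd_mult2 dvd_refl power2_eq_square mult.commute dvd_mult_left)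
  moreover have "coprime b (a ^ 2)" using cp by (simp add: coprime_commute)
  ultimately have "is_unit b" by (meson coprime_absorb_left) 
  then have "b = 1" using b by (simp add: zdvd1_eq)
  then show ?thesis using e by auto
qed

lemma sq_mod4: "(t::int)^2 mod 4 = 0 \<or> t^2 mod 4 = 1"
proof (cases "even t")
  case True then obtain k where "t = 2*k" by blast
  then show ?thesis by (simp add: power2_eq_square)
next
  case False then obtain k where "t = 2*k+1" using oddE by blast
  then have "t^2 = 4*(k^2+k) + 1" by (simp add: power2_eq_square algebra_simps)
  then show ?thesis by presburger
qed

lemma sq_mod4_even: "even (t::int) \<Longrightarrow> t^2 mod 4 = 0"
  by (auto simp: power2_eq_square)

lemma sq_mod4_odd: "odd (t::int) \<Longrightarrow> t^2 mod 4 = 1"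
proof -
  assume "odd t" then obtain k where "t = 2*k+1" using oddE by blast
  then have "t^2 = 4*(k^2+k) + 1" by (simp add: power2_eq_square algebra_simps)
  then show ?thesis by presburger
qed

lemma not_sq_mod4: "(x::int) mod 4 = 2 \<or> x mod 4 = 3 \<Longrightarrow> x \<noteq> t^2"
  using sq_mod4[of t] by auto

lemma mod4_2_odd: "(a::int) mod 4 = 2 \<Longrightarrow> odd b \<Longrightarrow> (a*b) mod 4 = 2"
proof -
  assume a: "a mod 4 = 2" and b: "odd b"
  have "b mod 4 = 1 \<or> b mod 4 = 3" using b by presburger
  moreover have "(a*b) mod 4 = ((a mod 4) * (b mod 4)) mod 4" by (simp add: mod_mult_eq)
  ultimately show ?thesis using a by auto
qed

lemma sq_mod3: "(x::int)^2 mod 3 = (if 3 dvd x then 0 else 1)"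
proof -
  have "x^2 mod 3 = (x mod 3)^2 mod 3" by (simp add: power_mod)
  moreover have "x mod 3 = 0 \<or> x mod 3 = 1 \<or> x mod 3 = 2" by presburger
  ultimately show ?thesis by (auto simp: power2_eq_square)
qed

lemma three_dvd_sum_sq: "3 dvd ((x::int)^2 + y^2) \<Longrightarrow> 3 dvd x \<and> 3 dvd y"
proof -
  assume h: "3 dvd (x^2 + y^2)"
  have "(x^2 + y^2) mod 3 = (x^2 mod 3 + y^2 mod 3) mod 3" by (simp add: mod_add_eq)
  then show ?thesis using h sq_mod3[of x] sq_mod3[of y] by (auto split: if_splits)
qed

lemma prime3: "prime (3::int)" by simp

lemma coprime_primes:
  fixes a b :: int
  assumes "\<And>p. prime p \<Longrightarrow> p dvd a \<Longrightarrow> p dvd b \<Longrightarrow> False"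
  shows "coprime a b"
proof (rule ccontr)
  assume nc: "\<not> coprime a b"
  define g where "g = gcd a b"
  have g0: "g \<noteq> 0"
  proof
    assume "g = 0" then have "a = 0" "b = 0" by (auto simp: g_def)
    then show False using assms[of 2] by simp
  qed
  have "\<not> is_unit g" using nc by (simp add: g_def coprime_iff_gcd_eq_1 is_unit_gcd)
  then obtain p where "p dvd g" "prime p" using prime_divisor_exists[OF g0] by blast
  then show False using assms[of p] by (simp add: g_def)
qed

lemma param:
  fixes al d be :: int
  assumes ao: "odd al" and cp: "coprime al d" and d0: "d \<noteq> 0" and eq: "al^2 - 2*d^2 = be^2"
  shows "\<exists>m n. m \<noteq> 0 \<and> odd n \<and> coprime m n \<and> d^2 = 4*m^2*n^2 \<and> al^2 = (n^2+2*m^2)^2"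
proof -
  define a where "a = \<bar>al\<bar>"
  define b where "b = \<bar>be\<bar>"
  have a2: "a^2 = al^2" and b2: "b^2 = be^2" by (simp_all add: a_def b_def)
  have aodd: "odd a" using ao by (simp add: a_def)
  have cpa: "coprime a d" using cp by (simp add: a_def)
  have e: "a^2 - 2*d^2 = b^2" using eq a2 b2 by simp
  have d2: "d^2 > 0" using d0 by simp
  have "b^2 < a^2" using e d2 by linarith
  then have ab: "b < a" using a_def b_def abs_ge_zero by (metis power_less_imp_less_base)
  have b0: "b \<ge> 0" by (simp add: b_def)
  have "odd (b^2)"
  proof -
    have "b^2 = a^2 - 2*d^2" using e by simp
    moreover have "odd (a^2 - 2*d^2)" using aodd by simp
    ultimately show ?thesis by simp
  qed
  then have bodd: "odd b" by simp
  have "even (a - b)" using aodd bodd by simp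
  then obtain A1 where A1: "a - b = 2*A1" by blast
  have "even (a + b)" using aodd bodd by simp
  then obtain B1 where B1: "a + b = 2*B1" by blast
  have A1p: "A1 > 0" using A1 ab by linarith
  have B1p: "B1 > 0" using B1 ab b0 by linarith
  have "4*(A1*B1) = a^2 - b^2" using A1 B1
  proof -
    have "4*(A1*B1) = (a - b)*(a + b)" using A1 B1 by simp
    also have "\<dots> = a^2 - b^2" by (simp add: power2_eq_square algebra_simps)
    finally show ?thesis .
  qed
  then have dA: "d^2 = 2*(A1*B1)" using e by linarith
  then have "even (d^2)" by simp
  then have "even d" by simp
  then obtain dl where dl: "d = 2*dl" by blast
  have AB: "A1*B1 = 2*dl^2" using dA dl by (simp add: power_mult_distrib)
  have cAB: "coprime A1 B1"
  proof (rule coprime_primes)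
    fix p :: int assume p: "prime p" "p dvd A1" "p dvd B1"
    have "a = A1 + B1" using A1 B1 by linarith
    then have "p dvd a" using p by simp
    moreover have "p dvd d^2" using dA p by simp
    then have "p dvd d" using p(1) prime_dvd_power by blast
    ultimately show False using cpa p(1) by (meson coprime_common_divisor not_prime_unit)
  qed
  have "even (A1*B1)" using AB by simp
  then have "even A1 \<or> even B1" by simp
  then show ?thesis
  proof
    assume "even A1"
    then obtain A2 where A2: "A1 = 2*A2" by blast
    have A2p: "A2 > 0" using A1p A2 by simp
    have e2: "A2*B1 = dl^2" using AB A2 by simp
    have c2: "coprime A2 B1" using cAB A2 by simp
    obtain m where m: "A2 = m^2" using coprime_pow_int[OF c2 A2p B1p e2] by blast
    obtain n where n: "B1 = n^2" using coprime_pow_int[OF c2[unfolded coprime_commute[of A2]] B1p A2p] e2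
      by (metis mult.commute)
    have aa: "a = 2*m^2 + n^2" using A1 B1 A2 m n by linarith
    have "m \<noteq> 0" using A2p m by auto
    moreover have "odd n" using aa aodd by auto
    moreover have "coprime m n" using c2 m n by simp
    moreover have "d^2 = 4*m^2*n^2" using dA A2 m n by simp
    moreover have "al^2 = (n^2+2*m^2)^2" using a2 aa by (metis add.commute)
    ultimately show ?thesis by blast
  next
    assume "even B1"
    then obtain B2 where B2: "B1 = 2*B2" by blast
    have B2p: "B2 > 0" using B1p B2 by simp
    have e2: "B2*A1 = dl^2" using AB B2 by (simp add: mult.commute)
    have c2: "coprime B2 A1" using cAB B2 by (simp add: coprime_commute)
    obtain m where m: "B2 = m^2" using coprime_pow_int[OF c2 B2p A1p e2] by blast
    obtain n where n: "A1 = n^2" using coprime_pow_int[OF c2[unfolded coprime_commute[of B2]] A1p B2p] e2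
      by (metis mult.commute)
    have aa: "a = 2*m^2 + n^2" using A1 B1 B2 m n by linarith
    have "m \<noteq> 0" using B2p m by auto
    moreover have "odd n" using aa aodd by auto
    moreover have "coprime m n" using c2 m n by simp
    moreover have "d^2 = 4*m^2*n^2" using dA B2 m n by simp
    moreover have "al^2 = (n^2+2*m^2)^2" using a2 aa by (metis add.commute)
    ultimately show ?thesis by blast
  qed
qed

lemma odd_sq8: "odd (x::int) \<Longrightarrow> \<exists>j. x^2 = 8*j+1"
proof -
  assume "odd x" then obtain k where k: "x = 2*k+1" using oddE by blast
  have "even (k*(k+1))" by simp
  then obtain j where j: "k*(k+1) = 2*j" by blast
  have "x^2 = 4*(k*(k+1)) + 1" using k by (simp add: power2_eq_square algebra_simps)
  then have "x^2 = 8*j+1" using j by simp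
  then show ?thesis by blast
qed

lemma split3:
  fixes X Y n :: int
  assumes c: "coprime X Y" and X: "X > 0" and Y: "Y > 0" and e: "X*Y = 3*n^4" and d: "3 dvd X"
  shows "\<exists>al be. X = 3*al^4 \<and> Y = be^4 \<and> coprime al be \<and> (al*be)^4 = n^4"
proof -
  obtain G where G: "X = 3*G" using d by blast
  have Gp: "G > 0" using G X by simp
  have eG: "G*Y = n^4" using e G by simp
  have cG: "coprime G Y" using c G by simp
  obtain al where al: "G = al^4" using coprime_pow_int[OF cG Gp Y eG] by blast
  obtain be where be: "Y = be^4"
    using coprime_pow_int[OF cG[unfolded coprime_commute[of G]] Y Gp] eG by (metis mult.commute)
  have "coprime al be" using cG al be by simp
  moreover have "(al*be)^4 = n^4" using eG al be by (simp add: power_mult_distrib)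
  ultimately show ?thesis using G al be by blast
qed

lemma prime_dvd2: "(p::int) dvd 2 \<Longrightarrow> prime p \<Longrightarrow> p = 2"
  by (metis primes_dvd_imp_eq two_is_prime_nat prime_int_numeral_eq)

lemma odd_prime_dvd: "prime p \<Longrightarrow> \<not> p dvd 2 \<Longrightarrow> p dvd 2*x \<Longrightarrow> p dvd (x::int)"
  by (simp add: prime_dvd_mult_iff)

lemma dvd_sq: "(p::int) dvd x \<Longrightarrow> p dvd x^2"
  by (simp add: power2_eq_square)

lemma prime_dvd3: "(p::int) dvd 3 \<Longrightarrow> prime p \<Longrightarrow> p = 3"
  by (metis prime3 primes_dvd_imp_eq)

lemma mod4_contra: "(C::int) mod 4 = 0 \<or> C mod 4 = 1 \<Longrightarrow> A = 8*j+1 \<Longrightarrow> A + C = -4*Y \<Longrightarrow> False"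
  by presburger

lemma step:
  fixes m n c :: int
  assumes m0: "m \<noteq> 0" and on: "odd n" and cp: "coprime m n"
    and eq: "(2*m*n)^2 + (n^2+2*m^2)^2 = c^2"
  shows "\<exists>m' n' c'. m' \<noteq> 0 \<and> odd n' \<and> coprime m' n' \<and>
           (2*m'*n')^2 + (n'^2+2*m'^2)^2 = c'^2 \<and> \<bar>m'\<bar> < \<bar>m\<bar>"
proof -
  define a where "a = \<bar>c\<bar>"
  have a0: "a \<ge> 0" by (simp add: a_def)
  have ea: "(2*m*n)^2 + (n^2+2*m^2)^2 = a^2" using eq by (simp add: a_def)
  define F1 where "F1 = 2*m^2+2*n^2 - a"
  define F2 where "F2 = 2*m^2+2*n^2 + a"
  have "F1*F2 = (2*m^2+2*n^2)^2 - a^2" by (simp add: F1_def F2_def power2_eq_square algebra_simps)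
  also have "\<dots> = (2*m^2+2*n^2)^2 - ((2*m*n)^2 + (n^2+2*m^2)^2)" using ea by simp
  also have "\<dots> = 3*n^4" by algebra
  finally have key: "F1*F2 = 3*n^4" .
  have n0: "n \<noteq> 0" using on by auto
  have "n^2 > 0" using n0 by simp
  have "m^2 \<ge> 0" by simp
  then have F2p: "F2 > 0" unfolding F2_def using \<open>n^2 > 0\<close> a0 by linarith
  have "F1*F2 > 0" using key n0 by simp
  then have F1p: "F1 > 0" using F2p by (simp add: zero_less_mult_iff)
  have "odd (a^2)"
  proof -
    have "odd ((2*m*n)^2 + (n^2+2*m^2)^2)" using on by simp
    then show ?thesis using ea by simp
  qed
  then have aodd: "odd a" by simp
  have F1odd: "odd F1" unfolding F1_def using aodd by simp
  have cF: "coprime F1 F2"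
  proof (rule coprime_primes)
    fix p :: int assume p: "prime p" "p dvd F1" "p dvd F2"
    have p2: "\<not> p dvd 2"
    proof
      assume "p dvd 2"
      then have "p = 2" using p(1) by (rule prime_dvd2)
      then show False using p(2) F1odd by simp
    qed
    have "2*a = F2 - F1" by (simp add: F1_def F2_def)
    then have "p dvd 2*a" using p by (simp add: dvd_diff)
    then have pa: "p dvd a" using p(1) p2 odd_prime_dvd by blast
    have "p dvd 2*(2*(m^2+n^2))" using p unfolding F1_def F2_def
    proof -
      have "F1 + F2 = 2*(2*(m^2+n^2))" unfolding F1_def F2_def by simp
      then show ?thesis using p by (metis dvd_add)
    qed
    then have "p dvd 2*(m^2+n^2)" using p(1) p2 odd_prime_dvd by blast
    then have pmn: "p dvd m^2+n^2" using p(1) p2 odd_prime_dvd by blast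
    have "p dvd 3*n^4" using key p by (metis dvd_mult2)
    then have "p dvd 3 \<or> p dvd n^4" using p(1) by (simp add: prime_dvd_mult_iff)
    then show False
    proof
      assume "p dvd 3"
      then have "p = 3" using p(1) by (rule prime_dvd3)
      then have "3 dvd m \<and> 3 dvd n" using pmn three_dvd_sum_sq by blast
      then show False using cp by (metis coprime_common_divisor not_prime_unit prime3)
    next
      assume "p dvd n^4"
      then have pn: "p dvd n" using p(1) prime_dvd_power by blast
      then have "p dvd n^2" by (rule dvd_sq)
      then have "p dvd m^2" using pmn by (metis dvd_add_left_iff add.commute)
      then have "p dvd m" using p(1) prime_dvd_power by blast
      then show False using pn cp p(1) by (meson coprime_common_divisor not_prime_unit)
    qed
  qed
  have "3 dvd F1*F2" using key by simp
  then have "3 dvd F1 \<or> 3 dvd F2" using prime3 by (simp add: prime_dvd_mult_iff)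
  then obtain al be where S: "3*al^4 + be^4 = F1 + F2" and cab: "coprime al be"
      and P4: "(al*be)^4 = n^4"
  proof
    assume "3 dvd F1"
    from split3[OF cF F1p F2p key this] show ?thesis using that by (metis add.commute)
  next
    assume "3 dvd F2"
    from split3[OF cF[unfolded coprime_commute[of F1]] F2p F1p _ this] key
    show ?thesis using that by (metis add.commute mult.commute)
  qed
  have "((al*be)^2)^2 = (n^2)^2" using P4 by (simp add: power_mult[symmetric])
  then have "(al*be)^2 = n^2" by (metis power2_eq_iff_nonneg zero_le_power2)
  then have n2: "n^2 = al^2*be^2" by (simp add: power_mult_distrib)
  have S': "3*al^4 + be^4 = 4*m^2 + 4*n^2" using S by (simp add: F1_def F2_def)
  have "(3*al^2-be^2)*(al^2-be^2) = 3*al^4 + be^4 - 4*(al^2*be^2)" by algebra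
  then have m4: "4*m^2 = (3*al^2-be^2)*(al^2-be^2)" using S' n2 by linarith
  have "odd (n^2)" using on by simp
  then have "odd (al^2*be^2)" using n2 by simp
  then have alo: "odd al" and beo: "odd be" by auto
  obtain j1 where j1: "al^2 = 8*j1+1" using odd_sq8[OF alo] by blast
  obtain j2 where j2: "be^2 = 8*j2+1" using odd_sq8[OF beo] by blast
  define Y where "Y = j1 - j2"
  have Yd: "al^2 - be^2 = 8*Y" using j1 j2 by (simp add: Y_def)
  define X where "X = al^2 + 4*Y"
  have X2: "3*al^2 - be^2 = 2*X" using Yd by (simp add: X_def)
  have "4*m^2 = (2*X)*(8*Y)" using m4 X2 Yd by simp
  also have "\<dots> = 4*(X*(4*Y))" by (simp add: algebra_simps)
  finally have mXY: "m^2 = X*(4*Y)" by simp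
  have cXY: "coprime X (4*Y)"
  proof (rule coprime_primes)
    fix p :: int assume p: "prime p" "p dvd X" "p dvd 4*Y"
    have "al^2 = X - 4*Y" by (simp add: X_def)
    then have "p dvd al^2" using p by (metis dvd_diff)
    then have pal: "p dvd al" using p(1) prime_dvd_power by blast
    have "be^2 = al^2 - 2*(4*Y)" using Yd by simp
    then have "p dvd be^2" using p \<open>p dvd al^2\<close> by (metis dvd_diff dvd_mult)
    then have "p dvd be" using p(1) prime_dvd_power by blast
    then show False using pal cab p(1) by (meson coprime_common_divisor not_prime_unit)
  qed
  have "m^2 > 0" using m0 by simp
  then have "X*(4*Y) > 0" by (simp only: mXY[symmetric])
  then have "(X > 0 \<and> 4*Y > 0) \<or> (X < 0 \<and> 4*Y < 0)" by (simp add: zero_less_mult_iff)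
  then show ?thesis
  proof
    assume neg: "X < 0 \<and> 4*Y < 0"
    have c2: "coprime (-X) (-(4*Y))" using cXY by simp
    have e2: "(-X)*(-(4*Y)) = m^2" using mXY by simp
    obtain c1 where c1: "-X = c1^2" using coprime_pow_int[OF c2 _ _ e2] neg by auto
    have "al^2 + c1^2 = -4*Y" using c1 by (simp add: X_def)
    then show ?thesis using mod4_contra[OF sq_mod4[of c1] j1] by simp
  next
    assume pos: "X > 0 \<and> 4*Y > 0"
    obtain c1 where c1: "X = c1^2" using coprime_pow_int[OF cXY _ _ mXY[symmetric]] pos by auto
    obtain d where d: "4*Y = d^2"
      using coprime_pow_int[OF cXY[unfolded coprime_commute[of X]] _ _] pos mXY by (metis mult.commute)
    have eb: "al^2 - 2*d^2 = be^2" using Yd d by simp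
    have ec: "d^2 + al^2 = c1^2" using c1 d by (simp add: X_def)
    have cad: "coprime al d"
    proof (rule coprime_primes)
      fix p :: int assume p: "prime p" "p dvd al" "p dvd d"
      have "p dvd al^2" "p dvd d^2" using p dvd_sq by blast+
      then have "p dvd be^2" using eb by (metis dvd_diff dvd_mult)
      then have "p dvd be" using p(1) prime_dvd_power by blast
      then show False using p cab by (meson coprime_common_divisor not_prime_unit)
    qed
    have d0: "d \<noteq> 0" using pos d by auto
    obtain m' n' where mn: "m' \<noteq> 0" "odd n'" "coprime m' n'" "d^2 = 4*m'^2*n'^2"
        "al^2 = (n'^2+2*m'^2)^2" using param[OF alo cad d0 eb] by blast
    have "(2*m'*n')^2 = d^2" using mn(4) by (simp add: power_mult_distrib)
    then have sol: "(2*m'*n')^2 + (n'^2+2*m'^2)^2 = c1^2" using mn(5) ec by simp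
    have "c1 \<noteq> 0" using c1 pos by auto
    then have "c1^2 > 0" by simp
    then have c11: "c1^2 \<ge> 1" by linarith
    have "n' \<noteq> 0" using mn(2) by auto
    then have "n'^2 > 0" by simp
    then have n11: "n'^2 \<ge> 1" by linarith
    have "4*m'^2*1 \<le> 4*m'^2*n'^2" using n11 by (intro mult_left_mono) auto
    then have "4*m'^2 \<le> d^2" using mn(4) by simp
    moreover have "1*d^2 \<le> c1^2*d^2" using c11 by (intro mult_right_mono) auto
    then have "d^2 \<le> m^2" using mXY c1 d by simp
    moreover have "m'^2 > 0" using mn(1) by simp
    ultimately have "m'^2 < m^2" by linarith
    then have "\<bar>m'\<bar> < \<bar>m\<bar>" by (metis abs_le_square_iff not_le)
    then show ?thesis using mn(1-3) sol by blast
  qed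
qed

lemma no_sol:
  fixes m n c :: int
  shows "m \<noteq> 0 \<Longrightarrow> odd n \<Longrightarrow> coprime m n \<Longrightarrow> (2*m*n)^2 + (n^2+2*m^2)^2 = c^2 \<Longrightarrow> False"
proof (induction "nat \<bar>m\<bar>" arbitrary: m n c rule: less_induct)
  case less
  from step[OF less.prems] obtain m' n' c' where h: "m' \<noteq> 0" "odd n'" "coprime m' n'"
    "(2*m'*n')^2 + (n'^2+2*m'^2)^2 = c'^2" "\<bar>m'\<bar> < \<bar>m\<bar>" by blast
  have "nat \<bar>m'\<bar> < nat \<bar>m\<bar>" using h(5) by simp
  then show False using less.hyps h(1-4) by blast
qed

lemma hard:
  fixes r s t :: int
  assumes cp: "coprime r s" and r0: "r \<noteq> 0" and ev: "even r"
    and eq: "(r^2+s^2)*(s^2-2*r^2) = t^2"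
  shows False
proof -
  have so: "odd s"
  proof (rule ccontr)
    assume "\<not> odd s" then have "even s" by simp
    then have "is_unit (2::int)" using coprime_common_divisor[OF cp] ev by blast
    then show False by simp
  qed
  define U where "U = r^2+s^2"
  define V where "V = s^2-2*r^2"
  have "r^2 > 0" using r0 by simp
  moreover have "s^2 \<ge> 0" by simp
  ultimately have Up: "U > 0" unfolding U_def by linarith
  have "odd V" using so by (simp add: V_def)
  then have V0: "V \<noteq> 0" by auto
  have UV: "U*V = t^2" using eq by (simp add: U_def V_def)
  have "V \<ge> 0"
  proof (rule ccontr)
    assume "\<not> V \<ge> 0"
    then have "U*V < 0" using Up by (simp add: mult_pos_neg)
    moreover have "t^2 \<ge> 0" by simp
    ultimately show False using UV by linarith
  qed
  then have Vp: "V > 0" using V0 by simp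
  have cUV: "coprime U V"
  proof (rule coprime_primes)
    fix p :: int assume p: "prime p" "p dvd U" "p dvd V"
    have e1: "U - V = 3*r^2" by (simp add: U_def V_def)
    have "p dvd U - V" using p by (simp add: dvd_diff)
    then have "p dvd 3*r^2" using e1 by simp
    then have h1: "p dvd 3 \<or> p dvd r" using p(1) by (simp add: prime_dvd_mult_iff prime_dvd_power_iff)
    have e2: "2*U + V = 3*s^2" by (simp add: U_def V_def)
    have "p dvd 2*U + V" using p by (simp add: dvd_add)
    then have "p dvd 3*s^2" using e2 by simp
    then have h2: "p dvd 3 \<or> p dvd s" using p(1) by (simp add: prime_dvd_mult_iff prime_dvd_power_iff)
    show False
    proof (cases "p dvd 3")
      case True
      then have "p = 3" using p(1) by (rule prime_dvd3)
      then have "3 dvd r^2 + s^2" using p(2) by (simp add: U_def)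
      then have "3 dvd r \<and> 3 dvd s" by (rule three_dvd_sum_sq)
      then show False using cp by (metis coprime_common_divisor not_prime_unit prime3)
    next
      case False
      then show False using h1 h2 cp p(1) by (meson coprime_common_divisor not_prime_unit)
    qed
  qed
  obtain a where a: "U = a^2" using coprime_pow_int[OF cUV Up Vp UV] by blast
  obtain b where b: "V = b^2" using coprime_pow_int[OF cUV[unfolded coprime_commute[of U]] Vp Up] UV
    by (metis mult.commute)
  have eb: "s^2 - 2*r^2 = b^2" using b by (simp add: V_def)
  have cp': "coprime s r" using cp by (simp add: coprime_commute)
  obtain m n where mn: "m \<noteq> 0" "odd n" "coprime m n" "r^2 = 4*m^2*n^2" "s^2 = (n^2+2*m^2)^2"
    using param[OF so cp' r0 eb] by blast
  have "(2*m*n)^2 = r^2" using mn(4) by (simp add: power_mult_distrib)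
  then have "(2*m*n)^2 + (n^2+2*m^2)^2 = a^2" using mn(5) a by (simp add: U_def)
  then show False using no_sol mn(1-3) by blast
qed

lemma m4eq: "(x::int) = y \<Longrightarrow> y mod 4 = c \<Longrightarrow> x mod 4 = c" by simp

lemma mod4_mult: "(a::int) mod 4 = 1 \<Longrightarrow> b mod 4 = 3 \<Longrightarrow> (a*b) mod 4 = 3"
proof -
  assume "a mod 4 = 1" "b mod 4 = 3"
  moreover have "(a*b) mod 4 = ((a mod 4) * (b mod 4)) mod 4" by (simp add: mod_mult_eq)
  ultimately show ?thesis by simp
qed

lemma cases_oo:
  fixes R S :: int
  assumes R: "R mod 4 = 1" and S: "S mod 4 = 1"
  shows "((R+S)*(2*R-S)) mod 4 = 2" "(-((R+S)*(2*R-S))) mod 4 = 2"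
    "(3*(2*S-R)*((R+S)*(2*R-S))) mod 4 = 2" "(-(3*(2*S-R)*((R+S)*(2*R-S)))) mod 4 = 2"
proof -
  have a: "(R+S) mod 4 = 2" using R S by presburger
  have b: "odd (2*R-S)" using R S by presburger
  have c: "odd (2*S-R)" using R S by presburger
  show "((R+S)*(2*R-S)) mod 4 = 2" using mod4_2_odd[OF a b] .
  have oo: "odd (-(2*R-S))" using b by simp
  show "(-((R+S)*(2*R-S))) mod 4 = 2" by (rule m4eq[OF _ mod4_2_odd[OF a oo]]) algebra
  have oo: "odd (3*(2*S-R)*(2*R-S))" using b c by simp
  show "(3*(2*S-R)*((R+S)*(2*R-S))) mod 4 = 2" by (rule m4eq[OF _ mod4_2_odd[OF a oo]]) algebra
  have oo: "odd (-(3*(2*S-R)*(2*R-S)))" using b c by simp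
  show "(-(3*(2*S-R)*((R+S)*(2*R-S)))) mod 4 = 2" by (rule m4eq[OF _ mod4_2_odd[OF a oo]]) algebra
qed

lemma cases_eo:
  fixes R S :: int
  assumes R: "R mod 4 = 0" and S: "S mod 4 = 1"
  shows "((R+S)*(2*R-S)) mod 4 = 3"
    "(3*(2*S-R)*((R+S)*(2*R-S))) mod 4 = 2" "(-(3*(2*S-R)*((R+S)*(2*R-S)))) mod 4 = 2"
proof -
  have a: "(R+S) mod 4 = 1" using R S by presburger
  have b: "(2*R-S) mod 4 = 3" using R S by presburger
  show "((R+S)*(2*R-S)) mod 4 = 3" using mod4_mult[OF a b] .
  have w: "(2*S-R) mod 4 = 2" using R S by presburger
  have o1: "odd (R+S)" "odd (2*R-S)" using R S by presburger+
  have oo: "odd (3*((R+S)*(2*R-S)))" using o1 by simp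
  show "(3*(2*S-R)*((R+S)*(2*R-S))) mod 4 = 2" by (rule m4eq[OF _ mod4_2_odd[OF w oo]]) algebra
  have oo: "odd (-(3*((R+S)*(2*R-S))))" using o1 by simp
  show "(-(3*(2*S-R)*((R+S)*(2*R-S)))) mod 4 = 2" by (rule m4eq[OF _ mod4_2_odd[OF w oo]]) algebra
qed

lemma cases_oe:
  fixes R S :: int
  assumes R: "R mod 4 = 1" and S: "S mod 4 = 0"
  shows "((R+S)*(2*R-S)) mod 4 = 2" "(-((R+S)*(2*R-S))) mod 4 = 2"
    "(3*(2*S-R)*((R+S)*(2*R-S))) mod 4 = 2" "(-(3*(2*S-R)*((R+S)*(2*R-S)))) mod 4 = 2"
proof -
  have a: "(2*R-S) mod 4 = 2" using R S by presburger
  have b: "odd (R+S)" using R S by presburger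
  have c: "odd (2*S-R)" using R S by presburger
  show "((R+S)*(2*R-S)) mod 4 = 2" by (rule m4eq[OF _ mod4_2_odd[OF a b]]) algebra
  have oo: "odd (-(R+S))" using b by simp
  show "(-((R+S)*(2*R-S))) mod 4 = 2" by (rule m4eq[OF _ mod4_2_odd[OF a oo]]) algebra
  have oo: "odd (3*(2*S-R)*(R+S))" using b c by simp
  show "(3*(2*S-R)*((R+S)*(2*R-S))) mod 4 = 2" by (rule m4eq[OF _ mod4_2_odd[OF a oo]]) algebra
  have oo: "odd (-(3*(2*S-R)*(R+S)))" using b c by simp
  show "(-(3*(2*S-R)*((R+S)*(2*R-S)))) mod 4 = 2" by (rule m4eq[OF _ mod4_2_odd[OF a oo]]) algebra
qed

lemma mod3_case:
  fixes r s t :: int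
  assumes cp: "coprime r s" and h: "3*(2*s^2-r^2) = t^2 \<or> -(3*(2*s^2-r^2)) = t^2"
  shows False
proof -
  have "3 dvd t^2" using h by (metis dvd_triv_left dvd_minus_iff)
  then have "3 dvd t" using prime3 prime_dvd_power by blast
  then obtain k where k: "t = 3*k" by blast
  have "3*(2*s^2-r^2) = 3*(3*k^2) \<or> 3*(2*s^2-r^2) = 3*(-(3*k^2))"
    using h k by (auto simp: power_mult_distrib)
  then have "2*s^2-r^2 = 3*k^2 \<or> 2*s^2-r^2 = 3*(-(k^2))" by auto
  then have "3 dvd 2*s^2-r^2" by (metis dvd_triv_left)
  moreover have "r^2 + s^2 = 3*s^2 - (2*s^2-r^2)" by simp
  ultimately have "3 dvd r^2 + s^2" by (metis dvd_diff dvd_triv_left)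
  then have "3 dvd r \<and> 3 dvd s" by (rule three_dvd_sum_sq)
  then show False using cp by (metis coprime_common_divisor not_prime_unit prime3)
qed

lemma nonsq:
  fixes r s t :: int
  assumes cp: "coprime r s" and r0: "r \<noteq> 0"
  shows "(r^2+s^2)*(2*r^2-s^2) \<noteq> t^2" "-((r^2+s^2)*(2*r^2-s^2)) \<noteq> t^2"
    "3*(2*s^2-r^2) \<noteq> t^2" "-(3*(2*s^2-r^2)) \<noteq> t^2"
    "3*(2*s^2-r^2)*((r^2+s^2)*(2*r^2-s^2)) \<noteq> t^2"
    "-(3*(2*s^2-r^2)*((r^2+s^2)*(2*r^2-s^2))) \<noteq> t^2"
proof -
  show "3*(2*s^2-r^2) \<noteq> t^2" "-(3*(2*s^2-r^2)) \<noteq> t^2" using mod3_case[OF cp] by blast+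
  have ne: "\<not> (even r \<and> even s)"
  proof
    assume "even r \<and> even s"
    then have "is_unit (2::int)" using coprime_common_divisor[OF cp] by blast
    then show False by simp
  qed
  have "(odd r \<and> odd s) \<or> (even r \<and> odd s) \<or> (odd r \<and> even s)" using ne by blast
  then have all: "(r^2+s^2)*(2*r^2-s^2) \<noteq> t^2 \<and> 
    3*(2*s^2-r^2)*((r^2+s^2)*(2*r^2-s^2)) \<noteq> t^2 \<and>
    -(3*(2*s^2-r^2)*((r^2+s^2)*(2*r^2-s^2))) \<noteq> t^2 \<and>
    (odd r \<longrightarrow> -((r^2+s^2)*(2*r^2-s^2)) \<noteq> t^2)"
  proof (elim disjE conjE)
    assume "odd r" "odd s"
    note c = cases_oo[OF sq_mod4_odd[OF this(1)] sq_mod4_odd[OF this(2)]]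
    show ?thesis using c not_sq_mod4 by blast
  next
    assume "even r" "odd s"
    note c = cases_eo[OF sq_mod4_even[OF this(1)] sq_mod4_odd[OF this(2)]]
    show ?thesis using c not_sq_mod4 \<open>even r\<close> by blast
  next
    assume "odd r" "even s"
    note c = cases_oe[OF sq_mod4_odd[OF this(1)] sq_mod4_even[OF this(2)]]
    show ?thesis using c not_sq_mod4 by blast
  qed
  then show "(r^2+s^2)*(2*r^2-s^2) \<noteq> t^2" "3*(2*s^2-r^2)*((r^2+s^2)*(2*r^2-s^2)) \<noteq> t^2"
    "-(3*(2*s^2-r^2)*((r^2+s^2)*(2*r^2-s^2))) \<noteq> t^2" by blast+
  show "-((r^2+s^2)*(2*r^2-s^2)) \<noteq> t^2"
  proof (cases "odd r")
    case True then show ?thesis using all by blast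
  next
    case False
    show ?thesis
    proof
      assume "-((r^2+s^2)*(2*r^2-s^2)) = t^2"
      then have "(r^2+s^2)*(s^2-2*r^2) = t^2" by (simp add: algebra_simps)
      then show False using hard[OF cp r0] False by blast
    qed
  qed
qed

lemma all8: "(\<forall>i<(8::nat). Q i) \<longleftrightarrow> Q 0 \<and> Q 1 \<and> Q 2 \<and> Q 3 \<and> Q 4 \<and> Q 5 \<and> Q 6 \<and> Q 7"
  by (simp add: eval_nat_numeral less_Suc_eq all_conj_distrib)

lemma cancel_rat: "(c::rat) \<noteq> 0 \<Longrightarrow> (\<And>t. x \<noteq> t*t) \<Longrightarrow> c*c*x \<noteq> t*t"
proof
  assume c: "c \<noteq> 0" and h: "\<And>t. x \<noteq> t*t" and e: "c*c*x = t*t"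
  have "x = (t/c)*(t/c)" using c e by (simp add: field_simps)
  then show False using h by blast
qed

lemma neg_sq_rat: "(x::rat) \<noteq> 0 \<Longrightarrow> -(x*x) \<noteq> t*t"
proof
  assume "x \<noteq> 0" "-(x*x) = t*t"
  moreover have "x*x > 0" using \<open>x \<noteq> 0\<close> by (simp add: zero_less_mult_iff linorder_neq_iff disj_commute)
  moreover have "t*t \<ge> 0" by simp
  ultimately show False by linarith
qed

lemma neg1_rat: "-1 \<noteq> (t::rat)*t"
  using neg_sq_rat[of 1 t] by simp

lemma sclass_prod: "same_sq_class x y \<Longrightarrow> \<exists>t. x*y = t*t"
proof -
  assume "same_sq_class x y"
  then obtain q where y: "y \<noteq> 0" and q: "x / y = q^2" by (auto simp: same_sq_class_def)
  have "x = q^2 * y" using y q by (simp add: field_simps)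
  then have "x*y = (q*y)*(q*y)" by (simp add: power2_eq_square algebra_simps)
  then show ?thesis by blast
qed

lemma eight_gen:
  fixes P w :: rat
  assumes P0: "P \<noteq> 0" and w0: "w \<noteq> 0"
    and nP: "\<And>t. P \<noteq> t*t" and nmP: "\<And>t. -P \<noteq> t*t"
    and nw: "\<And>t. w \<noteq> t*t" and nmw: "\<And>t. -w \<noteq> t*t"
    and nA: "\<And>t. P*w \<noteq> t*t" and nmA: "\<And>t. -(P*w) \<noteq> t*t"
  shows "\<forall>i<8. \<forall>j<8. i \<noteq> j \<longrightarrow> \<not> same_sq_class ([1,-1,P*w,-(P*w),P,-P,w,-w]!i) ([1,-1,P*w,-(P*w),P,-P,w,-w]!j)"
proof -
  have f1: "w*P \<noteq> t*t" "-(w*P) \<noteq> t*t" for t using nA nmA by (simp_all add: mult.commute)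
  have f2: "P*w*P \<noteq> t*t" "P*(P*w) \<noteq> t*t" for t using cancel_rat[OF P0 nw, of t] by (simp_all add: mult_ac)
  have f3: "-(P*w*P) \<noteq> t*t" "-(P*(P*w)) \<noteq> t*t" for t using cancel_rat[OF P0 nmw, of t] by (simp_all add: mult_ac)
  have f4: "P*w*w \<noteq> t*t" "w*(P*w) \<noteq> t*t" for t using cancel_rat[OF w0 nP, of t] by (simp_all add: mult_ac)
  have f5: "-(P*w*w) \<noteq> t*t" "-(w*(P*w)) \<noteq> t*t" for t using cancel_rat[OF w0 nmP, of t] by (simp_all add: mult_ac)
  have "P*w \<noteq> 0" using P0 w0 by simp
  then have f6: "-(P*w*(P*w)) \<noteq> t*t" "-(P*P) \<noteq> t*t" "-(w*w) \<noteq> t*t" for t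
    using neg_sq_rat P0 w0 by blast+
  have "\<forall>i<8. \<forall>j<8. i \<noteq> j \<longrightarrow> (\<forall>t. [1,-1,P*w,-(P*w),P,-P,w,-w]!i * [1,-1,P*w,-(P*w),P,-P,w,-w]!j \<noteq> t*t)"
    apply (simp only: all8)
    apply (simp del: minus_mult_left add: numeral_eq_Suc nP nmP nw nmw nA nmA f1 f2 f3 f4 f5 f6 neg1_rat)
    done
  then show ?thesis using sclass_prod by blast
qed

lemma int_nsq_rat: "(\<And>k. x \<noteq> k^2) \<Longrightarrow> (of_int x::rat) \<noteq> t*t"
  using rat_sq_int[of x t] by (auto simp: power2_eq_square)

lemma distinct_all:
  fixes r s :: int
  assumes cp: "coprime r s" and r0: "r \<noteq> 0"
  shows "eight_distinct_classes r s"
proof -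
  define u where "u = sq_u r s"
  define v where "v = sq_v r s"
  have u: "u = r^2+s^2" by (simp add: u_def sq_u_def)
  have v: "v = 2*r^2-s^2" by (simp add: v_def sq_v_def)
  define P :: rat where "P = of_int (u*v)"
  define w :: rat where "w = of_int (u^2 - v^2)"
  have L: "eight_list r s = [1,-1,P*w,-(P*w),P,-P,w,-w]"
    by (simp add: eight_list_def sq_A_def Let_def P_def w_def u_def v_def)
  have W: "u^2 - v^2 = r * r * (3*(2*s^2-r^2))" unfolding u v by algebra
  have UV: "u*v = (r^2+s^2)*(2*r^2-s^2)" unfolding u v ..
  note ns = nonsq[OF cp r0]
  have r0': "(of_int r :: rat) \<noteq> 0" using r0 by simp
  have nP: "P \<noteq> t*t" for t unfolding P_def UV by (rule int_nsq_rat) (rule ns(1))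
  have nmP: "-P \<noteq> t*t" for t unfolding P_def UV of_int_minus[symmetric] by (rule int_nsq_rat) (rule ns(2))
  have nw: "w \<noteq> t*t" for t
  proof -
    have "w = of_int r * of_int r * of_int (3*(2*s^2-r^2))" unfolding w_def W by simp
    moreover have "(of_int (3*(2*s^2-r^2)) :: rat) \<noteq> t*t" for t by (rule int_nsq_rat) (rule ns(3))
    ultimately show ?thesis using cancel_rat[OF r0'] by metis
  qed
  have nmw: "-w \<noteq> t*t" for t
  proof -
    have "-w = of_int r * of_int r * of_int (-(3*(2*s^2-r^2)))" unfolding w_def W by (simp add: algebra_simps)
    moreover have "(of_int (-(3*(2*s^2-r^2))) :: rat) \<noteq> t*t" for t by (rule int_nsq_rat) (rule ns(4))
    ultimately show ?thesis using cancel_rat[OF r0'] by metis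
  qed
  have nA: "P*w \<noteq> t*t" for t
  proof -
    have "P*w = of_int r * of_int r * of_int (3*(2*s^2-r^2)*((r^2+s^2)*(2*r^2-s^2)))"
      unfolding w_def W P_def UV by (simp add: mult_ac)
    moreover have "(of_int (3*(2*s^2-r^2)*((r^2+s^2)*(2*r^2-s^2))) :: rat) \<noteq> t*t" for t
      by (rule int_nsq_rat) (rule ns(5))
    ultimately show ?thesis using cancel_rat[OF r0'] by metis
  qed
  have nmA: "-(P*w) \<noteq> t*t" for t
  proof -
    have "-(P*w) = of_int r * of_int r * of_int (-(3*(2*s^2-r^2)*((r^2+s^2)*(2*r^2-s^2))))"
      unfolding w_def W P_def UV by (simp add: mult_ac)
    moreover have "(of_int (-(3*(2*s^2-r^2)*((r^2+s^2)*(2*r^2-s^2)))) :: rat) \<noteq> t*t" for t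
      by (rule int_nsq_rat) (rule ns(6))
    ultimately show ?thesis using cancel_rat[OF r0'] by metis
  qed
  have P0: "P \<noteq> 0" using nP[of 0] by simp
  have w0: "w \<noteq> 0" using nw[of 0] by simp
  have "\<forall>i<8. [1,-1,P*w,-(P*w),P,-P,w,-w]!i \<noteq> (0::rat)"
    by (simp only: all8) (simp add: numeral_eq_Suc P0 w0)
  then show ?thesis unfolding eight_distinct_classes_def L
    using eight_gen[OF P0 w0 nP nmP nw nmw nA nmA] by blast
qed

theorem lemma6p1:
  shows "finite {(r :: int, s :: int). coprime r s \<and> r \<noteq> 0 \<and> \<not> eight_distinct_classes r s}"
proof -
  have "{(r :: int, s :: int). coprime r s \<and> r \<noteq> 0 \<and> \<not> eight_distinct_classes r s} = {}"
    using distinct_all by auto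
  then show ?thesis by (metis finite.emptyI)
qed

end
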